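(* (1) Every PP-rich set in $(\mathbb{N},+)$ contains a family of $2^\omega$ almost disjoint subsets each of which is PP-rich. (2) Every PP-rich set in $(\mathbb{N},+)$ can be split into $\omega$ pairwise disjoint subsets each of which is PP-rich.
   Context: $\mathbb{N}=\{1,2,\dots\}$. $\mathbb{P}$ denotes the set of polynomials with coefficients in $\mathbb{N}\cup\{0\}$ and zero constant term which map $\mathbb{N}$ into $\mathbb{N}$; $\mathcal{P}_f(\mathbb{P})$ is the set of nonempty finite subsets of $\mathbb{P}$. $A\subseteq\mathbb{N}$ is PP-rich if for every $R\in\mathcal{P}_f(\mathbb{P})$ there exist $a,x\in\mathbb{N}$ with $\{a+f(x): f\in R\}\subseteq A$. For an infinite set $X$, a family of almost disjoint subsets of $X$ consists of subsets of $X$ of cardinality $|X|$ any two distinct of which meet in a set of cardinality less than $|X|$. *)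

theory Defs
  imports "HOL-Computational_Algebra.Polynomial" "HOL-Library.Equipollence"
begin

definition PPolys :: "nat poly set" where
  "PPolys = {p. poly p 0 = 0 \<and> (\<forall>n::nat. n \<ge> 1 \<longrightarrow> poly p n \<ge> 1)}"

definition PP_rich :: "nat set \<Rightarrow> bool" where
  "PP_rich A \<longleftrightarrow> (\<forall>R. finite R \<and> R \<noteq> {} \<and> R \<subseteq> PPolys \<longrightarrow>
      (\<exists>a x::nat. a \<ge> 1 \<and> x \<ge> 1 \<and> (\<forall>f\<in>R. a + poly f x \<in> A)))"

end

theory Submission
  imports Defs "HOL-Library.Countable_Set"
begin

definition PPset :: "nat poly set set" where
  "PPset = {R. finite R \<and> R \<noteq> {} \<and> R \<subseteq> PPolys}"

definition Pgood :: "nat set \<Rightarrow> nat \<Rightarrow> nat poly set \<Rightarrow> nat \<times> nat \<Rightarrow> bool" where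
  "Pgood A m R p \<longleftrightarrow> fst p \<ge> 1 \<and> snd p \<ge> 1 \<and>
     (\<forall>f\<in>R. fst p + poly f (snd p) \<in> A \<and> m < fst p + poly f (snd p))"

definition pick :: "nat set \<Rightarrow> nat \<Rightarrow> nat poly set \<Rightarrow> nat \<times> nat" where
  "pick A m R = (SOME p. Pgood A m R p)"

definition cfg :: "nat set \<Rightarrow> nat \<Rightarrow> nat poly set \<Rightarrow> nat set" where
  "cfg A m R = (\<lambda>f. fst (pick A m R) + poly f (snd (pick A m R))) ` R"

primrec thr :: "nat set \<Rightarrow> (nat \<Rightarrow> nat poly set) \<Rightarrow> nat \<Rightarrow> nat" where
  "thr A Q 0 = 0"
| "thr A Q (Suc n) = Max (cfg A (thr A Q n) (Q n))"

definition W :: "nat set \<Rightarrow> (nat \<Rightarrow> nat poly set) \<Rightarrow> nat \<Rightarrow> nat set" where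
  "W A Q n = cfg A (thr A Q n) (Q n)"

lemma poly_ge:
  assumes "f \<in> PPolys" "(y::nat) \<ge> 1"
  shows "y \<le> poly f y"
proof -
  obtain a p where f: "f = pCons a p" by (cases f) auto
  have "a = 0" using assms(1) f by (simp add: PPolys_def)
  have "poly f y \<ge> 1" using assms by (simp add: PPolys_def)
  then have "poly f y = y * poly p y" using f \<open>a = 0\<close> by simp
  with \<open>poly f y \<ge> 1\<close> have "poly p y \<ge> 1" by (cases "poly p y") auto
  then show ?thesis using \<open>poly f y = y * poly p y\<close> by simp
qed

lemma pick_good:
  assumes "PP_rich A" "R \<in> PPset"
  shows "Pgood A m R (pick A m R)"
proof -
  define R' where "R' = (\<lambda>f. pcompose f [:0, m+1:]) ` R"
  have "R' \<subseteq> PPolys"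
  proof
    fix g assume "g \<in> R'"
    then obtain f where f: "f \<in> R" "g = pcompose f [:0, m+1:]" unfolding R'_def by auto
    have fP: "f \<in> PPolys" using f assms(2) by (auto simp: PPset_def)
    show "g \<in> PPolys" unfolding PPolys_def
    proof (intro CollectI conjI allI impI)
      show "poly g 0 = 0" using fP f by (simp add: poly_pcompose PPolys_def)
      fix n :: nat assume "n \<ge> 1"
      then have "(m+1)*n \<ge> 1" by simp
      moreover from fP have "\<forall>k\<ge>1. poly f k \<ge> 1" by (simp add: PPolys_def)
      ultimately have "poly f ((m+1)*n) \<ge> 1" by blast
      then show "poly g n \<ge> 1" using f by (simp add: poly_pcompose algebra_simps)
    qed
  qed
  moreover have "finite R'" "R' \<noteq> {}" using assms(2) by (auto simp: R'_def PPset_def)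
  ultimately obtain a x where ax: "a \<ge> 1" "x \<ge> 1" "\<forall>g\<in>R'. a + poly g x \<in> A"
    using assms(1) unfolding PP_rich_def by blast
  have "Pgood A m R (a, (m+1)*x)" unfolding Pgood_def
  proof (intro conjI ballI)
    show "1 \<le> fst (a, (m + 1) * x)" "1 \<le> snd (a, (m + 1) * x)" using ax by auto
    fix f assume f: "f \<in> R"
    then have "a + poly (pcompose f [:0, m+1:]) x \<in> A" using ax unfolding R'_def by auto
    then show "fst (a, (m + 1) * x) + poly f (snd (a, (m + 1) * x)) \<in> A"
      by (simp add: poly_pcompose algebra_simps)
    have "f \<in> PPolys" using f assms(2) by (auto simp: PPset_def)
    then have "(m+1)*x \<le> poly f ((m+1)*x)" using poly_ge ax by simp
    moreover have "m < (m+1)*x" using ax by (cases x) auto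
    ultimately show "m < fst (a, (m + 1) * x) + poly f (snd (a, (m + 1) * x))" by simp
  qed
  then show ?thesis unfolding pick_def by (rule someI)
qed

locale wctx =
  fixes A :: "nat set" and Q :: "nat \<Rightarrow> nat poly set"
  assumes rich: "PP_rich A" and QP: "\<And>n. Q n \<in> PPset"
begin

lemma W_good: "Pgood A (thr A Q n) (Q n) (pick A (thr A Q n) (Q n))"
  using pick_good[OF rich QP] .

lemma W_fin: "finite (W A Q n)" "W A Q n \<noteq> {}"
  using QP[of n] by (auto simp: W_def cfg_def PPset_def)

lemma W_sub: "W A Q n \<subseteq> A"
  using W_good[of n] by (auto simp: W_def cfg_def Pgood_def)

lemma W_wit: "\<exists>a x. a \<ge> 1 \<and> x \<ge> 1 \<and> (\<forall>f\<in>Q n. a + poly f x \<in> W A Q n)"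
  using W_good[of n] unfolding Pgood_def W_def cfg_def by blast

lemma W_range: "y \<in> W A Q n \<Longrightarrow> thr A Q n < y \<and> y \<le> thr A Q (Suc n)"
  using W_good[of n] W_fin[of n]
  by (auto simp: W_def cfg_def Pgood_def)

lemma thr_less: "thr A Q n < thr A Q (Suc n)"
proof -
  obtain y where "y \<in> W A Q n" using W_fin[of n] by blast
  then show ?thesis using W_range by fastforce
qed

lemma thr_mono: "n \<le> m \<Longrightarrow> thr A Q n \<le> thr A Q m"
proof -
  assume "n \<le> m"
  have "\<And>k. thr A Q k \<le> thr A Q (Suc k)" using thr_less less_imp_le by blast
  then show ?thesis using \<open>n \<le> m\<close> by (rule lift_Suc_mono_le)
qed

lemma W_disj: "n \<noteq> m \<Longrightarrow> W A Q n \<inter> W A Q m = {}"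
proof -
  have *: "W A Q n \<inter> W A Q m = {}" if "n < m" for n m
  proof -
    have "Suc n \<le> m" using that by simp
    then have "thr A Q (Suc n) \<le> thr A Q m" by (rule thr_mono)
    then show ?thesis using W_range[of _ n] W_range[of _ m] by fastforce
  qed
  assume "n \<noteq> m"
  then show ?thesis using *[of n m] *[of m n] by (cases "n < m") auto
qed

end

lemma PPset_countable: "countable PPset"
proof -
  have "countable (UNIV :: nat poly set)"
    by (rule countable_image_inj_on[where f = coeffs])
       (auto simp: inj_on_def coeffs_eq_iff)
  then have "countable {R. finite R \<and> R \<subseteq> (UNIV :: nat poly set)}"
    by (rule countable_Collect_finite_subset)
  then show ?thesis by (rule countable_subset[rotated]) (auto simp: PPset_def)
qed

lemma PPset_ne: "PPset \<noteq> {}"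
proof -
  have "{[:0, 1:]} \<in> PPset" by (auto simp: PPset_def PPolys_def)
  then show ?thesis by blast
qed

lemma rich_infinite:
  assumes "PP_rich B" shows "infinite B"
proof
  assume fin: "finite B"
  define M where "M = Suc (Max (insert 0 B))"
  have "{[:0, M:]} \<in> PPset" by (auto simp: PPset_def PPolys_def M_def)
  then have "\<exists>a x. a \<ge> 1 \<and> x \<ge> 1 \<and> (\<forall>f\<in>{[:0, M:]}. a + poly f x \<in> B)"
    using assms unfolding PP_rich_def PPset_def by blast
  then obtain a x where ax: "a \<ge> 1" "x \<ge> 1" "a + M * x \<in> B" by (auto simp: mult.commute)
  then have "a + M * x \<le> Max (insert 0 B)" using fin by simp
  moreover have "M \<le> M * x" using ax by simp
  ultimately show False unfolding M_def by simp
qed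

lemma rich_by_W:
  assumes "\<And>R. R \<in> PPset \<Longrightarrow> \<exists>a x. a \<ge> 1 \<and> x \<ge> 1 \<and> (\<forall>f\<in>R. a + poly f x \<in> B)"
  shows "PP_rich B"
  using assms unfolding PP_rich_def PPset_def by blast

theorem theorem5p7:
  fixes A :: "nat set"
  assumes "A \<subseteq> {1..}" and "PP_rich A"
  shows "(\<exists>F :: nat set set. F \<approx> (UNIV :: nat set set) \<and>
            (\<forall>B\<in>F. B \<subseteq> A \<and> infinite B \<and> PP_rich B) \<and>
            (\<forall>B\<in>F. \<forall>C\<in>F. B \<noteq> C \<longrightarrow> finite (B \<inter> C)))
       \<and> (\<exists>D :: nat \<Rightarrow> nat set. (\<Union>i. D i) = A \<and>
            (\<forall>i j. i \<noteq> j \<longrightarrow> D i \<inter> D j = {}) \<and>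
            (\<forall>i. PP_rich (D i)))"
proof
  define e where "e = from_nat_into PPset"
  have rng: "range e = PPset" unfolding e_def using PPset_ne PPset_countable by simp
  have eP: "e n \<in> PPset" for n using rng by blast
  show "\<exists>F :: nat set set. F \<approx> (UNIV :: nat set set) \<and>
            (\<forall>B\<in>F. B \<subseteq> A \<and> infinite B \<and> PP_rich B) \<and>
            (\<forall>B\<in>F. \<forall>C\<in>F. B \<noteq> C \<longrightarrow> finite (B \<inter> C))"
  proof -
    define Q where "Q n = e (length (from_nat n :: bool list))" for n
    interpret wctx A Q using assms(2) eP by unfold_locales (simp_all add: Q_def)
    define V where "V s = W A Q (to_nat (s :: bool list))" for s
    have Vdisj: "s \<noteq> t \<Longrightarrow> V s \<inter> V t = {}" for s t
      unfolding V_def by (rule W_disj) (simp add: inj_eq)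
    have Vwit: "\<exists>a x. a \<ge> 1 \<and> x \<ge> 1 \<and> (\<forall>f\<in>e (length s). a + poly f x \<in> V s)" for s
      using W_wit[of "to_nat s"] by (simp add: V_def Q_def)
    define pre where "pre b k = map b [0..<k]" for b :: "nat \<Rightarrow> bool" and k
    define B where "B b = (\<Union>k. V (pre b k))" for b
    have Bsub: "B b \<subseteq> A" for b using W_sub by (auto simp: B_def V_def)
    have Brich: "PP_rich (B b)" for b
    proof (rule rich_by_W)
      fix R assume "R \<in> PPset"
      then obtain r where r: "R = e r" using rng by blast
      obtain a x where "a \<ge> 1 \<and> x \<ge> 1 \<and> (\<forall>f\<in>e (length (pre b r)). a + poly f x \<in> V (pre b r))"
        using Vwit by blast
      then show "\<exists>a x. a \<ge> 1 \<and> x \<ge> 1 \<and> (\<forall>f\<in>R. a + poly f x \<in> B b)"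
        using r by (auto simp: pre_def B_def)
    qed
    have Binf: "infinite (B b)" for b using Brich rich_infinite by blast
    have Bad: "finite (B b \<inter> B c)" if bc: "b \<noteq> c" for b c
    proof -
      have "\<exists>j. b j \<noteq> c j" using bc by (simp add: fun_eq_iff)
      then obtain j where j: "b j \<noteq> c j" by blast
      have "B b \<inter> B c \<subseteq> (\<Union>k\<le>j. V (pre b k))"
      proof
        fix y assume "y \<in> B b \<inter> B c"
        then obtain k k' where y: "y \<in> V (pre b k)" "y \<in> V (pre c k')" by (auto simp: B_def)
        then have eq: "pre b k = pre c k'" using Vdisj by blast
        then have "k = k'" by (metis length_map length_upt minus_nat.diff_0 pre_def)
        have "k \<le> j"
        proof (rule ccontr)
          assume "\<not> k \<le> j"
          then have "pre b k ! j = b j" "pre c k' ! j = c j" using \<open>k = k'\<close> by (auto simp: pre_def)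
          then show False using eq j by simp
        qed
        then show "y \<in> (\<Union>k\<le>j. V (pre b k))" using y by blast
      qed
      moreover have "finite (\<Union>k\<le>j. V (pre b k))" using W_fin by (simp add: V_def)
      ultimately show ?thesis by (rule finite_subset)
    qed
    have injB: "inj B"
    proof (rule injI, rule ccontr)
      fix b c assume "B b = B c" "b \<noteq> c"
      then show False using Bad[of b c] Binf[of b] by simp
    qed
    have "range B \<approx> (UNIV :: (nat \<Rightarrow> bool) set)"
      using injB by (meson eqpoll_sym inj_on_image_eqpoll_self)
    also have "(UNIV :: (nat \<Rightarrow> bool) set) \<approx> (UNIV :: nat set set)"
      unfolding eqpoll_def
      by (rule exI[of _ Collect]) (auto simp: bij_betw_def inj_on_def)
    finally have "range B \<approx> (UNIV :: nat set set)" .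
    moreover have "\<forall>X\<in>range B. \<forall>Y\<in>range B. X \<noteq> Y \<longrightarrow> finite (X \<inter> Y)"
    proof (intro ballI impI)
      fix X Y assume "X \<in> range B" "Y \<in> range B" "X \<noteq> Y"
      then obtain b c where "X = B b" "Y = B c" "b \<noteq> c" by blast
      then show "finite (X \<inter> Y)" using Bad by simp
    qed
    ultimately show ?thesis using Bsub Brich Binf by (intro exI[of _ "range B"]) auto
  qed
  show "\<exists>D :: nat \<Rightarrow> nat set. (\<Union>i. D i) = A \<and>
            (\<forall>i j. i \<noteq> j \<longrightarrow> D i \<inter> D j = {}) \<and>
            (\<forall>i. PP_rich (D i))"
  proof -
    define Q where "Q n = e (snd (prod_decode n))" for n
    interpret wctx A Q using assms(2) eP by unfold_locales (simp_all add: Q_def)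
    define D where "D i = (if i = 0 then A - (\<Union>n\<in>{n. fst (prod_decode n) \<noteq> 0}. W A Q n)
                           else (\<Union>n\<in>{n. fst (prod_decode n) = i}. W A Q n))" for i
    have WD: "W A Q n \<subseteq> D (fst (prod_decode n))" for n
    proof (cases "fst (prod_decode n) = 0")
      case True
      have "W A Q n \<inter> W A Q m = {}" if "fst (prod_decode m) \<noteq> 0" for m
      proof -
        have "n \<noteq> m" using that True by auto
        then show ?thesis by (rule W_disj)
      qed
      then show ?thesis using True W_sub[of n] by (auto simp: D_def)
    next
      case False
      then show ?thesis by (auto simp: D_def)
    qed
    have "(\<Union>i. D i) = A"
    proof
      show "(\<Union>i. D i) \<subseteq> A" using W_sub by (auto simp: D_def split: if_splits)
      show "A \<subseteq> (\<Union>i. D i)"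
      proof
        fix y assume "y \<in> A"
        show "y \<in> (\<Union>i. D i)"
        proof (cases "y \<in> (\<Union>n\<in>{n. fst (prod_decode n) \<noteq> 0}. W A Q n)")
          case True
          then obtain n where "y \<in> W A Q n" by blast
          then show ?thesis using WD by blast
        next
          case False
          then have "y \<in> D 0" using \<open>y \<in> A\<close> by (simp add: D_def)
          then show ?thesis by blast
        qed
      qed
    qed
    moreover have "\<forall>i j. i \<noteq> j \<longrightarrow> D i \<inter> D j = {}"
    proof (intro allI impI)
      fix i j :: nat assume ij: "i \<noteq> j"
      have nz: "D i \<inter> D j = {}" if ijn: "i \<noteq> j" "j \<noteq> 0" for i j
      proof (cases "i = 0")
        case True then show ?thesis using ijn by (auto simp: D_def)
      next
        case False
        show ?thesis
        proof (rule ccontr)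
          assume "D i \<inter> D j \<noteq> {}"
          then obtain y n m where "y \<in> W A Q n" "y \<in> W A Q m" "fst (prod_decode n) = i"
            "fst (prod_decode m) = j" using False ijn by (auto simp: D_def)
          then show False using W_disj[of n m] ijn by auto
        qed
      qed
      show "D i \<inter> D j = {}"
      proof (cases "j = 0")
        case True then show ?thesis using nz[of j i] ij by auto
      next
        case False then show ?thesis using nz ij by auto
      qed
    qed
    moreover have "PP_rich (D i)" for i
    proof (rule rich_by_W)
      fix R assume "R \<in> PPset"
      then obtain r where r: "R = e r" using rng by blast
      define n where "n = prod_encode (i, r)"
      obtain a x where "a \<ge> 1 \<and> x \<ge> 1 \<and> (\<forall>f\<in>Q n. a + poly f x \<in> W A Q n)"
        using W_wit by blast
      moreover have "W A Q n \<subseteq> D i" using WD[of n] by (simp add: n_def)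
      moreover have "Q n = R" by (simp add: Q_def n_def r)
      ultimately show "\<exists>a x. a \<ge> 1 \<and> x \<ge> 1 \<and> (\<forall>f\<in>R. a + poly f x \<in> D i)" by blast
    qed
    ultimately show ?thesis by blast
  qed
qed

end
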